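(* Consider the clock protocol (defined in the context) run by a population of $n$ agents with a fixed constant drip probability $p\in(0,1]$. For each minute index $i$, with very high probability $$t^{0.1}_{\ge i+1}-t^{0.1}_{\ge i}\le 2.11+\tfrac12\ln\!\left(\tfrac1p\right).$$
   Context: Clock protocol: $n$ agents, each with an integer field $\mathtt{minute}$, initially $0$. At each step an ordered pair of distinct agents is chosen uniformly at random to interact; parallel time $t$ corresponds to $tn$ interactions. Transitions: (drip) if both agents have $\mathtt{minute}=i$, then with probability $p$ one of them moves to $\mathtt{minute}=i+1$; (epidemic) if the agents have minutes $j>k$, the agent with minute $k$ sets its minute to $j$. $c_{\ge i}(t)$ is the fraction of agents with $\mathtt{minute}\ge i$ at time $t$, and $t^{0.1}_{\ge i}=\min\{t: c_{\ge i}(t)\ge 0.1\}$. "With very high probability" means with probability $1-n^{-\omega(1)}$ as $n\to\infty$ ($p$ fixed); the execution is considered over polynomially many minutes. *)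

theory Defs
  imports "HOL-Probability.Probability"
begin

text \<open>Configurations of the clock protocol: agents are 0,...,n-1, each has a minute.\<close>
type_synonym config = "nat \<Rightarrow> nat"

text \<open>One interaction between initiator a and responder b; coin is the outcome of the
  drip coin (true with probability p).\<close>
definition interact :: "nat \<Rightarrow> nat \<Rightarrow> bool \<Rightarrow> config \<Rightarrow> config" where
  "interact a b coin m =
     (if m a = m b then (if coin then m(a := Suc (m a)) else m)
      else if m a > m b then m(b := m a) else m(a := m b))"

definition pairs :: "nat \<Rightarrow> (nat \<times> nat) set" where
  "pairs n = {(a, b). a < n \<and> b < n \<and> a \<noteq> b}"

definition step :: "nat \<Rightarrow> real \<Rightarrow> config \<Rightarrow> config pmf" where
  "step n p m =
     do { (a, b) \<leftarrow> pmf_of_set (pairs n);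
          coin \<leftarrow> bernoulli_pmf p;
          return_pmf (interact a b coin m) }"

fun run :: "nat \<Rightarrow> real \<Rightarrow> nat \<Rightarrow> config list pmf" where
  "run n p 0 = return_pmf [(\<lambda>_. 0)]"
| "run n p (Suc k) =
     do { xs \<leftarrow> run n p k; m' \<leftarrow> step n p (last xs); return_pmf (xs @ [m']) }"

text \<open>c_{>=i} >= 0.1: at least a 0.1 fraction of the n agents have minute >= i.\<close>
definition frac_ge :: "nat \<Rightarrow> nat \<Rightarrow> config \<Rightarrow> bool" where
  "frac_ge n i m \<longleftrightarrow> 10 * card {a. a < n \<and> i \<le> m a} \<ge> n"

text \<open>Interaction k is the first one at which c_{>=i} >= 0.1 (so t^{0.1}_{>=i} = k/n).\<close>
definition first_hit :: "nat \<Rightarrow> nat \<Rightarrow> config list \<Rightarrow> nat \<Rightarrow> bool" where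
  "first_hit n i xs k \<longleftrightarrow> k < length xs \<and> frac_ge n i (xs ! k) \<and>
      (\<forall>j<k. \<not> frac_ge n i (xs ! j))"

text \<open>Failure event, restricted to t^{0.1}_{>=i} <= N/n: t^{0.1}_{>=i} is reached at some
  interaction k <= N but t^{0.1}_{>=i+1} - t^{0.1}_{>=i} > c, i.e. c_{>=i+1} does not reach 0.1
  within the next c*n interactions.\<close>
definition gap_fail :: "nat \<Rightarrow> nat \<Rightarrow> real \<Rightarrow> nat \<Rightarrow> config list \<Rightarrow> bool" where
  "gap_fail n i c N xs \<longleftrightarrow>
     (\<exists>k\<le>N. first_hit n i xs k \<and>
        \<not> (\<exists>k'. k' < length xs \<and> real k' \<le> real k + c * real n \<and> frac_ge n (Suc i) (xs ! k')))"

text \<open>Number of interactions needed to decide the failure event up to horizon N.\<close>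
definition horizon :: "nat \<Rightarrow> real \<Rightarrow> nat \<Rightarrow> nat" where
  "horizon n c N = N + nat \<lceil>c * real n\<rceil> + 1"

end

theory Submission
  imports Defs "HOL-Real_Asymp.Real_Asymp"
begin


definition cnt :: "nat \<Rightarrow> nat \<Rightarrow> config \<Rightarrow> nat" where
  "cnt n i s = card {a. a < n \<and> i \<le> s a}"

lemma frac_ge_cnt: "frac_ge n i s \<longleftrightarrow> n \<le> 10 * cnt n i s"
  by (simp add: frac_ge_def cnt_def)

lemma interact_mono: "s x \<le> interact a b c s x"
  by (auto simp: interact_def)

lemma step_mono: "s' \<in> set_pmf (step n p s) \<Longrightarrow> s x \<le> s' x"
  by (auto simp: step_def interact_mono split: prod.splits)

lemma cnt_mono: "(\<And>x. s x \<le> s' x) \<Longrightarrow> cnt n i s \<le> cnt n i s'"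
  unfolding cnt_def by (rule card_mono) (auto intro: order_trans)

lemma cnt_step_mono: "s' \<in> set_pmf (step n p s) \<Longrightarrow> cnt n i s \<le> cnt n i s'"
  by (rule cnt_mono) (rule step_mono)

lemma cnt_le_n: "cnt n i s \<le> n"
proof -
  have "cnt n i s \<le> card {..<n}" unfolding cnt_def by (rule card_mono) auto
  thus ?thesis by simp
qed

lemma cnt_Suc_le: "cnt n (Suc i) s \<le> cnt n i s"
  unfolding cnt_def by (rule card_mono) auto

fun iter :: "nat \<Rightarrow> real \<Rightarrow> nat \<Rightarrow> config \<Rightarrow> config pmf" where
  "iter n p 0 s = return_pmf s"
| "iter n p (Suc m) s = bind_pmf (iter n p m s) (step n p)"

lemma iter_add: "iter n p (a + b) s = bind_pmf (iter n p a s) (iter n p b)"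
proof (induction b)
  case 0 thus ?case by (simp add: bind_return_pmf')
next
  case (Suc b) thus ?case by (simp add: bind_assoc_pmf)
qed

lemma iter_closed:
  assumes "\<forall>s\<in>S. set_pmf (step n p s) \<subseteq> S" "s \<in> S"
  shows "set_pmf (iter n p m s) \<subseteq> S"
  using assms by (induction m) auto

lemma iter_super:
  assumes closed: "\<forall>s\<in>S. set_pmf (step n p s) \<subseteq> S"
    and one: "\<forall>s\<in>S. (\<integral>\<^sup>+s'. g s' \<partial>step n p s) \<le> ennreal r * g s"
    and "s \<in> S"
  shows "(\<integral>\<^sup>+s'. g s' \<partial>iter n p m s) \<le> ennreal r ^ m * g s"
proof (induction m)
  case 0 thus ?case by simp
next
  case (Suc m)
  have "(\<integral>\<^sup>+s'. g s' \<partial>iter n p (Suc m) s) = (\<integral>\<^sup>+x. (\<integral>\<^sup>+s'. g s' \<partial>step n p x) \<partial>iter n p m s)"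
    by simp
  also have "\<dots> \<le> (\<integral>\<^sup>+x. ennreal r * g x \<partial>iter n p m s)"
  proof (rule nn_integral_mono_AE)
    show "AE x in measure_pmf (iter n p m s). (\<integral>\<^sup>+s'. g s' \<partial>step n p x) \<le> ennreal r * g x"
      using iter_closed[OF closed \<open>s \<in> S\<close>, of m] one
      by (auto simp: AE_measure_pmf_iff)
  qed
  also have "\<dots> = ennreal r * (\<integral>\<^sup>+x. g x \<partial>iter n p m s)"
    by (rule nn_integral_cmult) simp
  also have "\<dots> \<le> ennreal r * (ennreal r ^ m * g s)"
    by (rule mult_left_mono[OF Suc]) simp
  finally show ?case by (simp add: mult.assoc)
qed

lemma one_minus_exp_ge: "0 \<le> x \<Longrightarrow> x / (1 + x) \<le> 1 - exp (- (x::real))"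
proof -
  assume x: "0 \<le> x"
  have "1 + x \<le> exp x" by (rule exp_ge_add_one_self)
  hence "exp (-x) \<le> 1 / (1 + x)" using x by (simp add: exp_minus field_simps)
  moreover have "1 / (1 + x) = 1 - x / (1 + x)" using x by (simp add: field_simps)
  ultimately show ?thesis by simp
qed

lemma phase:
  fixes f :: "config \<Rightarrow> nat" and d :: "nat \<Rightarrow> real"
  assumes closed: "\<forall>s\<in>S. set_pmf (step n p s) \<subseteq> S"
    and mono: "\<forall>s\<in>S. \<forall>s'\<in>set_pmf (step n p s). f s \<le> f s'"
    and Sdef: "\<forall>s\<in>S. L \<le> f s"
    and rate: "\<forall>s\<in>S. f s < T \<longrightarrow> 1 / d (f s) \<le> measure_pmf.prob (step n p s) {s'. Suc (f s) \<le> f s'}"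
    and dpos: "\<forall>j. L \<le> j \<longrightarrow> j < T \<longrightarrow> 0 < d j \<and> d j \<le> D"
    and mu: "0 < \<mu>" "\<mu> \<le> 1" and D0: "0 \<le> D" and s0: "s0 \<in> S"
  shows "emeasure (iter n p m s0) {s. f s < T}
          \<le> ennreal (exp (\<mu> * (\<Sum>j\<in>{L..<T}. d j)) * (1 - \<mu> + \<mu>\<^sup>2 * D) ^ m)"
proof -
  define W where "W k = (\<Sum>j\<in>{L..<k}. d j)" for k
  define g where "g s = ennreal (if f s < T then exp (- \<mu> * W (f s)) else 0)" for s
  define r where "r = 1 - \<mu> + \<mu>\<^sup>2 * D"
  have r0: "0 \<le> r"
    unfolding r_def using mu D0 by (simp add: add_nonneg_nonneg)
  have Wmono: "W a \<le> W b" if "a \<le> b" "b \<le> T" for a b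
    unfolding W_def using that dpos
    by (intro sum_mono2) (auto simp: less_imp_le)
  have W0: "0 \<le> W a" if "a \<le> T" for a
    using Wmono[of L a] that by (cases "L \<le> a") (auto simp: W_def)
  have one: "(\<integral>\<^sup>+s'. g s' \<partial>step n p s) \<le> ennreal r * g s" if sS: "s \<in> S" for s
  proof (cases "f s < T")
    case False
    have "(\<integral>\<^sup>+s'. g s' \<partial>step n p s) = (\<integral>\<^sup>+s'. 0 \<partial>step n p s)"
    proof (intro nn_integral_cong_AE, unfold AE_measure_pmf_iff, intro ballI)
      fix y assume y: "y \<in> set_pmf (step n p s)"
      have "f s \<le> f y" using mono sS y by blast
      thus "g y = 0" using False by (simp add: g_def)
    qed
    thus ?thesis by simp
  next
    case True
    define k where "k = f s"
    have Lk: "L \<le> k" using Sdef sS by (auto simp: k_def)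
    have kT: "k < T" using True k_def by simp
    define A where "A = exp (- \<mu> * W k)"
    define B where "B = exp (- \<mu> * W (Suc k))"
    define q where "q = measure_pmf.prob (step n p s) {s'. Suc k \<le> f s'}"
    have dk: "0 < d k" "d k \<le> D" using dpos Lk kT by auto
    have WS: "W (Suc k) = W k + d k" unfolding W_def using Lk by simp
    have BA: "B = A * exp (- (\<mu> * d k))"
      unfolding A_def B_def WS by (simp add: algebra_simps flip: exp_add)
    have A0: "0 < A" by (simp add: A_def)
    have BleA: "B \<le> A" unfolding BA using A0 dk mu by simp
    have q1: "1 / d k \<le> q" using rate sS True by (simp add: q_def k_def)
    have q2: "q \<le> 1" by (simp add: q_def)
    have pt: "g s' \<le> ennreal B + ennreal (A - B) * indicator {s'. f s' < Suc k} s'"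
      if s': "s' \<in> set_pmf (step n p s)" for s'
    proof -
      have ks': "k \<le> f s'" using mono sS s' by (auto simp: k_def)
      show ?thesis
      proof (cases "f s' < Suc k")
        case True
        hence "f s' = k" using ks' by simp
        have B0: "0 \<le> B" by (simp add: B_def)
        have "ennreal B + ennreal (A - B) = ennreal A"
          using BleA B0 by (subst ennreal_plus[symmetric]) auto
        thus ?thesis using True kT \<open>f s' = k\<close> by (simp add: g_def A_def)
      next
        case False
        have "g s' \<le> ennreal B"
        proof (cases "f s' < T")
          case True
          have "W (Suc k) \<le> W (f s')" using False True by (intro Wmono) auto
          hence "exp (- \<mu> * W (f s')) \<le> B" unfolding B_def using mu by simp
          thus ?thesis using True by (simp add: g_def ennreal_leI)
        qed (simp add: g_def)
        thus ?thesis using False by simp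
      qed
    qed
    have "(\<integral>\<^sup>+s'. g s' \<partial>step n p s)
        \<le> (\<integral>\<^sup>+s'. ennreal B + ennreal (A - B) * indicator {s'. f s' < Suc k} s' \<partial>step n p s)"
      using pt by (intro nn_integral_mono_AE) (auto simp: AE_measure_pmf_iff)
    also have "\<dots> = ennreal B + ennreal (A - B) * emeasure (measure_pmf (step n p s)) {s'. f s' < Suc k}"
      by (subst nn_integral_add) (auto simp: nn_integral_cmult_indicator)
    also have "emeasure (measure_pmf (step n p s)) {s'. f s' < Suc k} = ennreal (1 - q)"
    proof -
      have "{s'. f s' < Suc k} = UNIV - {s'. Suc k \<le> f s'}" by auto
      thus ?thesis
        using measure_pmf.prob_compl[of "{s'. Suc k \<le> f s'}" "step n p s"]
        by (simp add: q_def measure_pmf.emeasure_eq_measure)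
    qed
    also have "ennreal B + ennreal (A - B) * ennreal (1 - q) = ennreal (B + (A - B) * (1 - q))"
      using BleA q2 A0 by (subst ennreal_plus) (auto simp: B_def ennreal_mult)
    also have "B + (A - B) * (1 - q) \<le> r * A"
    proof -
      define x where "x = \<mu> * d k"
      have x0: "0 \<le> x" using mu dk by (simp add: x_def)
      have "A - B = A * (1 - exp (- x))" by (simp add: BA x_def algebra_simps)
      also have "\<dots> \<ge> A * (x / (1 + x))"
        using one_minus_exp_ge[OF x0] A0 by (intro mult_left_mono) auto
      finally have AB: "A * (x / (1 + x)) \<le> A - B" .
      have "(A - B) * q \<ge> (A - B) * (1 / d k)"
        using q1 BleA by (intro mult_left_mono) auto
      moreover have "(A * (x / (1 + x))) * (1 / d k) \<le> (A - B) * (1 / d k)"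
        using AB dk by (intro mult_right_mono) auto
      moreover have "(A * (x / (1 + x))) * (1 / d k) = A * \<mu> / (1 + x)"
        using dk by (simp add: x_def field_simps)
      moreover have "A * \<mu> / (1 + x) \<ge> A * \<mu> * (1 - x)"
      proof -
        have "(1 - x) * (1 + x) \<le> 1" by (simp add: algebra_simps)
        hence "1 - x \<le> 1 / (1 + x)" using x0 by (simp add: field_simps)
        thus ?thesis using A0 mu by (simp add: divide_simps mult_left_mono) (smt (verit) mult_left_mono mult_pos_pos x0)
      qed
      moreover have "x \<le> \<mu> * D" using dk mu by (simp add: x_def)
      moreover have "A * \<mu> * (1 - x) \<ge> A * \<mu> * (1 - \<mu> * D)"
        using \<open>x \<le> \<mu> * D\<close> A0 mu by (intro mult_left_mono) auto
      ultimately have "(A - B) * q \<ge> A * \<mu> * (1 - \<mu> * D)" by linarith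
      thus ?thesis unfolding r_def by (simp add: algebra_simps power2_eq_square)
    qed
    hence "ennreal (B + (A - B) * (1 - q)) \<le> ennreal r * g s"
      using True r0 A0 by (simp add: g_def k_def A_def ennreal_mult[symmetric])
    finally show ?thesis .
  qed
  have "emeasure (iter n p m s0) {s. f s < T} = (\<integral>\<^sup>+s. indicator {s. f s < T} s \<partial>iter n p m s0)"
    by simp
  also have "\<dots> \<le> (\<integral>\<^sup>+s. ennreal (exp (\<mu> * W T)) * g s \<partial>iter n p m s0)"
  proof (intro nn_integral_mono)
    fix s
    show "indicator {s. f s < T} s \<le> ennreal (exp (\<mu> * W T)) * g s"
    proof (cases "f s < T")
      case True
      have "W (f s) \<le> W T" using True by (intro Wmono) auto
      hence "1 \<le> exp (\<mu> * W T) * exp (- \<mu> * W (f s))"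
        using mu by (simp flip: exp_add)
      thus ?thesis using True by (simp add: g_def flip: ennreal_mult)
    qed simp
  qed
  also have "\<dots> = ennreal (exp (\<mu> * W T)) * (\<integral>\<^sup>+s. g s \<partial>iter n p m s0)"
    by (rule nn_integral_cmult) simp
  also have "\<dots> \<le> ennreal (exp (\<mu> * W T)) * (ennreal r ^ m * g s0)"
    by (intro mult_left_mono iter_super[OF closed _ s0]) (auto intro: one)
  also have "g s0 \<le> 1"
  proof -
    have "f s0 < T \<Longrightarrow> 0 \<le> W (f s0)" by (intro W0) auto
    thus ?thesis using mu by (auto simp: g_def)
  qed
  hence "ennreal (exp (\<mu> * W T)) * (ennreal r ^ m * g s0) \<le> ennreal (exp (\<mu> * W T)) * (ennreal r ^ m * 1)"
    by (intro mult_left_mono) auto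
  also have "\<dots> = ennreal (exp (\<mu> * W T) * r ^ m)" using r0 by (simp add: ennreal_mult ennreal_power)
  finally show ?thesis by (simp add: W_def r_def)
qed

lemma pairs_eq: "pairs n = ({..<n} \<times> {..<n}) - (\<lambda>a. (a, a)) ` {..<n}"
  by (auto simp: pairs_def)

lemma finite_pairs: "finite (pairs n)"
  unfolding pairs_eq by auto

lemma card_pairs: "card (pairs n) = n * (n - 1)"
proof -
  have "card (pairs n) = card ({..<n} \<times> {..<n}) - card ((\<lambda>a. (a, a)) ` {..<n})"
    unfolding pairs_eq by (rule card_Diff_subset) auto
  also have "card ((\<lambda>a. (a, a)) ` {..<n}) = n" by (subst card_image) (auto simp: inj_on_def)
  finally show ?thesis by (simp add: card_cartesian_product algebra_simps)
qed

lemma pairs_nonempty: "2 \<le> n \<Longrightarrow> pairs n \<noteq> {}"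
proof -
  assume "2 \<le> n"
  hence "(0, 1) \<in> pairs n" by (simp add: pairs_def)
  thus ?thesis by auto
qed

lemma step_prob_lb:
  fixes p :: real
  assumes n: "2 \<le> n" and p: "0 \<le> p" "p \<le> 1"
    and E: "E1 \<subseteq> pairs n" "E2 \<subseteq> pairs n" "E1 \<inter> E2 = {}"
    and h1: "\<And>a b c. (a, b) \<in> E1 \<Longrightarrow> interact a b c s \<in> A"
    and h2: "\<And>a b. (a, b) \<in> E2 \<Longrightarrow> interact a b True s \<in> A"
  shows "(card E1 + p * card E2) / (n * (n - 1)) \<le> measure_pmf.prob (step n p s) A"
proof -
  define h where "h x = indicator E1 x + p * indicator E2 x" for x :: "nat \<times> nat"
  have fin: "finite (pairs n)" "pairs n \<noteq> {}" using finite_pairs pairs_nonempty n by auto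
  have inner: "ennreal (h x) \<le> emeasure (measure_pmf (case x of (a, b) \<Rightarrow>
      bernoulli_pmf p \<bind> (\<lambda>coin. return_pmf (interact a b coin s)))) A" for x
  proof -
    obtain a b where x: "x = (a, b)" by (cases x)
    have "emeasure (measure_pmf (bernoulli_pmf p \<bind> (\<lambda>coin. return_pmf (interact a b coin s)))) A
        = indicator A (interact a b True s) * ennreal p + indicator A (interact a b False s) * ennreal (1 - p)"
      using p by (simp add: indicator_def)
    moreover have "ennreal (h x) \<le> indicator A (interact a b True s) * ennreal p + indicator A (interact a b False s) * ennreal (1 - p)"
    proof (cases "x \<in> E1")
      case True
      hence "x \<notin> E2" using E by auto
      hence "h x = 1" using True by (simp add: h_def)
      moreover have "interact a b True s \<in> A" "interact a b False s \<in> A" using h1 True x by auto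
      ultimately show ?thesis using p by (simp flip: ennreal_plus)
    next
      case False
      show ?thesis
      proof (cases "x \<in> E2")
        case True
        thus ?thesis using False h2 x by (simp add: h_def)
      qed (simp add: h_def False)
    qed
    ultimately show ?thesis by (simp add: x)
  qed
  have hsum: "(\<Sum>x\<in>pairs n. h x) = card E1 + p * card E2"
  proof -
    have "(\<Sum>x\<in>pairs n. h x) = (\<Sum>x\<in>pairs n. indicator E1 x) + p * (\<Sum>x\<in>pairs n. indicator E2 x)"
      by (simp add: h_def sum.distrib sum_distrib_left)
    moreover have c1: "(\<Sum>x\<in>pairs n. indicator E1 x :: real) = card E1"
    proof -
      have "pairs n \<inter> {x. x \<in> E1} = E1" using E by auto
      thus ?thesis using fin by (simp add: indicator_def sum.If_cases)
    qed
    moreover have c2: "(\<Sum>x\<in>pairs n. indicator E2 x :: real) = card E2"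
    proof -
      have "pairs n \<inter> {x. x \<in> E2} = E2" using E by auto
      thus ?thesis using fin by (simp add: indicator_def sum.If_cases)
    qed
    ultimately show ?thesis by (simp only: c1 c2)
  qed
  have h0: "0 \<le> h x" for x using p by (simp add: h_def)
  have "emeasure (measure_pmf (step n p s)) A = (\<Sum>x\<in>pairs n. emeasure (measure_pmf (case x of (a, b) \<Rightarrow>
      bernoulli_pmf p \<bind> (\<lambda>coin. return_pmf (interact a b coin s)))) A) / card (pairs n)"
    unfolding step_def emeasure_bind_pmf using fin
    by (subst nn_integral_pmf_of_set) (auto simp: case_prod_unfold)
  also have "\<dots> \<ge> (\<Sum>x\<in>pairs n. ennreal (h x)) / card (pairs n)"
    by (intro divide_right_mono_ennreal sum_mono inner)
  finally have "ennreal (card E1 + p * card E2) / ennreal (card (pairs n)) \<le> ennreal (measure_pmf.prob (step n p s) A)"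
    using h0 hsum by (simp add: measure_pmf.emeasure_eq_measure ennreal_of_nat_eq_real_of_nat)
  moreover have "ennreal (card E1 + p * card E2) / ennreal (card (pairs n)) = ennreal ((card E1 + p * card E2) / card (pairs n))"
    using fin p by (intro divide_ennreal) (auto simp: card_gt_0_iff)
  ultimately have "(card E1 + p * card E2) / card (pairs n) \<le> measure_pmf.prob (step n p s) A"
    by (simp add: ennreal_le_iff)
  thus ?thesis using n by (simp add: card_pairs of_nat_diff)
qed

lemma cnt_incr:
  assumes "\<And>x. s x \<le> s' x" "y < n" "s y < i" "i \<le> s' y"
  shows "Suc (cnt n i s) \<le> cnt n i s'"
proof -
  have "insert y {a. a < n \<and> i \<le> s a} \<subseteq> {a. a < n \<and> i \<le> s' a}"
    using assms by (auto intro: order_trans)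
  hence "card (insert y {a. a < n \<and> i \<le> s a}) \<le> cnt n i s'"
    unfolding cnt_def by (intro card_mono) auto
  moreover have "card (insert y {a. a < n \<and> i \<le> s a}) = Suc (cnt n i s)"
    using assms unfolding cnt_def by (subst card_insert_disjoint) auto
  ultimately show ?thesis by simp
qed

lemma card_split:
  fixes s :: config shows
  "card {x. x < n \<and> i \<le> s x} + card {x. x < n \<and> s x < i} = n"
proof -
  have "card ({x. x < n \<and> i \<le> s x} \<union> {x. x < n \<and> s x < i}) =
        card {x. x < n \<and> i \<le> s x} + card {x. x < n \<and> s x < i}"
    by (rule card_Un_disjoint) auto
  moreover have "{x. x < n \<and> i \<le> s x} \<union> {x. x < n \<and> s x < i} = {..<n}" by auto
  ultimately show ?thesis by simp
qed

lemma card_cross2: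
  assumes "finite G" "finite H" "G \<inter> H = {}"
  shows "card (G \<times> H \<union> H \<times> G) = 2 * card G * card H"
proof -
  have "card (G \<times> H \<union> H \<times> G) = card (G \<times> H) + card (H \<times> G)"
    using assms by (intro card_Un_disjoint) auto
  thus ?thesis by (simp add: card_cartesian_product)
qed

lemma rateA:
  fixes p :: real
  assumes n: "2 \<le> n" and p: "0 \<le> p" "p \<le> 1"
  shows "real (2 * cnt n i s * (n - cnt n i s)) / (real n * (real n - 1))
         \<le> measure_pmf.prob (step n p s) {s'. Suc (cnt n i s) \<le> cnt n i s'}"
proof -
  define G where "G = {x. x < n \<and> i \<le> s x}"
  define Gc where "Gc = {x. x < n \<and> s x < i}"
  have cG: "card G = cnt n i s" by (simp add: G_def cnt_def)
  have cGc: "card Gc = n - cnt n i s" using card_split[of n i s] by (simp add: Gc_def cnt_def)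
  have E: "G \<times> Gc \<union> Gc \<times> G \<subseteq> pairs n" by (auto simp: G_def Gc_def pairs_def)
  have cE: "card (G \<times> Gc \<union> Gc \<times> G) = 2 * cnt n i s * (n - cnt n i s)"
  proof -
    have "G \<inter> Gc = {}" "finite G" "finite Gc" by (auto simp: G_def Gc_def)
    thus ?thesis using card_cross2[of G Gc] cG cGc by simp
  qed
  have "(real (card (G \<times> Gc \<union> Gc \<times> G)) + p * real (card ({} :: (nat \<times> nat) set))) / (real n * (real n - 1))
        \<le> measure_pmf.prob (step n p s) {s'. Suc (cnt n i s) \<le> cnt n i s'}"
  proof (rule step_prob_lb[OF n p E])
    fix a b c assume ab: "(a, b) \<in> G \<times> Gc \<union> Gc \<times> G"
    show "interact a b c s \<in> {s'. Suc (cnt n i s) \<le> cnt n i s'}"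
    proof (cases "(a, b) \<in> G \<times> Gc")
      case True
      hence "interact a b c s = s(b := s a)" by (auto simp: interact_def G_def Gc_def)
      thus ?thesis using True interact_mono[of s _ a b c]
        by (auto intro!: cnt_incr[of s _ b] simp: G_def Gc_def)
    next
      case False
      hence F: "(a, b) \<in> Gc \<times> G" using ab by auto
      hence "interact a b c s = s(a := s b)" by (auto simp: interact_def G_def Gc_def)
      thus ?thesis using F interact_mono[of s _ a b c]
        by (auto intro!: cnt_incr[of s _ a] simp: G_def Gc_def)
    qed
  qed auto
  thus ?thesis using cE by simp
qed

lemma rateB:
  fixes p :: real
  assumes n: "2 \<le> n" and p: "0 \<le> p" "p \<le> 1"
  shows "(real (2 * cnt n (Suc i) s * (n - cnt n (Suc i) s))
          + p * real ((cnt n i s - cnt n (Suc i) s) * (cnt n i s - cnt n (Suc i) s - 1)))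
          / (real n * (real n - 1))
         \<le> measure_pmf.prob (step n p s) {s'. Suc (cnt n (Suc i) s) \<le> cnt n (Suc i) s'}"
proof -
  define H where "H = {x. x < n \<and> Suc i \<le> s x}"
  define Hc where "Hc = {x. x < n \<and> s x < Suc i}"
  define I where "I = {x. x < n \<and> s x = i}"
  define E2 where "E2 = I \<times> I - (\<lambda>x. (x, x)) ` I"
  have cH: "card H = cnt n (Suc i) s" by (simp add: H_def cnt_def)
  have cHc: "card Hc = n - cnt n (Suc i) s" using card_split[of n "Suc i" s] by (simp add: Hc_def cnt_def)
  have "card ({x. x < n \<and> i \<le> s x}) = card (H \<union> I)"
    by (rule arg_cong[where f=card]) (auto simp: H_def I_def)
  also have "\<dots> = card H + card I" by (rule card_Un_disjoint) (auto simp: H_def I_def)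
  finally have cI: "card I = cnt n i s - cnt n (Suc i) s" using cH by (simp add: cnt_def)
  have cE2: "card E2 = card I * (card I - 1)"
  proof -
    have "card E2 = card (I \<times> I) - card ((\<lambda>x. (x, x)) ` I)"
      unfolding E2_def by (rule card_Diff_subset) (auto simp: I_def)
    also have "card ((\<lambda>x. (x, x)) ` I) = card I" by (subst card_image) (auto simp: inj_on_def)
    finally show ?thesis by (simp add: card_cartesian_product algebra_simps)
  qed
  have E: "H \<times> Hc \<union> Hc \<times> H \<subseteq> pairs n" "E2 \<subseteq> pairs n" "(H \<times> Hc \<union> Hc \<times> H) \<inter> E2 = {}"
    by (auto simp: H_def Hc_def pairs_def E2_def I_def)
  have cE: "card (H \<times> Hc \<union> Hc \<times> H) = 2 * cnt n (Suc i) s * (n - cnt n (Suc i) s)"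
  proof -
    have "H \<inter> Hc = {}" "finite H" "finite Hc" by (auto simp: H_def Hc_def)
    thus ?thesis using card_cross2[of H Hc] cH cHc by simp
  qed
  have "(real (card (H \<times> Hc \<union> Hc \<times> H)) + p * real (card E2)) / (real n * (real n - 1))
        \<le> measure_pmf.prob (step n p s) {s'. Suc (cnt n (Suc i) s) \<le> cnt n (Suc i) s'}"
  proof (rule step_prob_lb[OF n p E])
    fix a b c assume ab: "(a, b) \<in> H \<times> Hc \<union> Hc \<times> H"
    show "interact a b c s \<in> {s'. Suc (cnt n (Suc i) s) \<le> cnt n (Suc i) s'}"
    proof (cases "(a, b) \<in> H \<times> Hc")
      case True
      hence "interact a b c s = s(b := s a)" by (auto simp: interact_def H_def Hc_def)
      thus ?thesis using True interact_mono[of s _ a b c]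
        by (auto intro!: cnt_incr[of s _ b] simp: H_def Hc_def)
    next
      case False
      hence F: "(a, b) \<in> Hc \<times> H" using ab by auto
      hence "interact a b c s = s(a := s b)" by (auto simp: interact_def H_def Hc_def)
      thus ?thesis using F interact_mono[of s _ a b c]
        by (auto intro!: cnt_incr[of s _ a] simp: H_def Hc_def)
    qed
  next
    fix a b assume ab: "(a, b) \<in> E2"
    hence "interact a b True s = s(a := Suc i)" by (auto simp: interact_def E2_def I_def)
    thus "interact a b True s \<in> {s'. Suc (cnt n (Suc i) s) \<le> cnt n (Suc i) s'}"
      using ab interact_mono[of s _ a b True]
      by (auto intro!: cnt_incr[of s _ a] simp: E2_def I_def)
  qed
  thus ?thesis using cE cE2 cI by simp
qed

lemma run_length: "xs \<in> set_pmf (run n p k) \<Longrightarrow> length xs = Suc k"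
  by (induction k arbitrary: xs) auto

lemma run_take: "j \<le> K \<Longrightarrow> map_pmf (take (Suc j)) (run n p K) = run n p j"
proof (induction K)
  case 0 thus ?case by simp
next
  case (Suc K)
  show ?case
  proof (cases "j = Suc K")
    case True
    have "map_pmf (take (Suc j)) (run n p (Suc K)) = map_pmf id (run n p (Suc K))"
      using run_length[of _ n p "Suc K"] True by (intro map_pmf_cong) auto
    thus ?thesis using True by simp
  next
    case False
    hence jK: "j \<le> K" using Suc by simp
    have "map_pmf (take (Suc j)) (run n p (Suc K))
        = bind_pmf (run n p K) (\<lambda>xs. map_pmf (take (Suc j)) (bind_pmf (step n p (last xs)) (\<lambda>m'. return_pmf (xs @ [m']))))"
      by (simp add: map_bind_pmf)
    also have "\<dots> = bind_pmf (run n p K) (\<lambda>xs. return_pmf (take (Suc j) xs))"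
    proof (intro bind_pmf_cong refl)
      fix xs assume xs: "xs \<in> set_pmf (run n p K)"
      hence len: "length xs = Suc K" by (rule run_length)
      have "map_pmf (take (Suc j)) (bind_pmf (step n p (last xs)) (\<lambda>m'. return_pmf (xs @ [m'])))
          = bind_pmf (step n p (last xs)) (\<lambda>m'. return_pmf (take (Suc j) xs))"
        using len jK by (simp add: map_bind_pmf)
      also have "\<dots> = return_pmf (take (Suc j) xs)" by simp
      finally show "map_pmf (take (Suc j)) (bind_pmf (step n p (last xs)) (\<lambda>m'. return_pmf (xs @ [m']))) = return_pmf (take (Suc j) xs)" .
    qed
    also have "\<dots> = map_pmf (take (Suc j)) (run n p K)" by (simp add: map_pmf_def)
    finally show ?thesis using Suc.IH jK by simp
  qed
qed

lemma run_markov: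
  "(\<integral>\<^sup>+xs. indicator {xs. P (take (Suc k) xs)} xs * g (last xs) \<partial>run n p (k + j))
   = (\<integral>\<^sup>+xs. indicator {xs. P xs} xs * (\<integral>\<^sup>+s. g s \<partial>iter n p j (last xs)) \<partial>run n p k)"
proof (induction j arbitrary: g)
  case 0
  show ?case unfolding add_0_right
  proof (intro nn_integral_cong_AE, unfold AE_measure_pmf_iff, intro ballI)
    fix xs assume "xs \<in> set_pmf (run n p k)"
    hence "length xs = Suc k" using run_length by simp
    hence "take (Suc k) xs = xs" by simp
    thus "indicator {xs. P (take (Suc k) xs)} xs * g (last xs) = indicator {xs. P xs} xs * (\<integral>\<^sup>+s. g s \<partial>iter n p 0 (last xs))"
      by (simp add: indicator_def)
  qed
next
  case (Suc j)
  have "(\<integral>\<^sup>+xs. indicator {xs. P (take (Suc k) xs)} xs * g (last xs) \<partial>run n p (k + Suc j))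
      = (\<integral>\<^sup>+xs. \<integral>\<^sup>+m'. indicator {xs. P (take (Suc k) xs)} (xs @ [m']) * g m' \<partial>step n p (last xs) \<partial>run n p (k + j))"
    by simp
  also have "\<dots> = (\<integral>\<^sup>+xs. indicator {xs. P (take (Suc k) xs)} xs * (\<integral>\<^sup>+s. g s \<partial>step n p (last xs)) \<partial>run n p (k + j))"
  proof (intro nn_integral_cong_AE, unfold AE_measure_pmf_iff, intro ballI)
    fix xs assume "xs \<in> set_pmf (run n p (k + j))"
    hence "length xs = Suc (k + j)" by (rule run_length)
    hence "\<And>m'. take (Suc k) (xs @ [m']) = take (Suc k) xs" by simp
    hence "\<And>m'. indicator {xs. P (take (Suc k) xs)} (xs @ [m']) = (indicator {xs. P (take (Suc k) xs)} xs :: ennreal)"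
      by (simp add: indicator_def)
    thus "(\<integral>\<^sup>+m'. indicator {xs. P (take (Suc k) xs)} (xs @ [m']) * g m' \<partial>step n p (last xs))
       = indicator {xs. P (take (Suc k) xs)} xs * (\<integral>\<^sup>+s. g s \<partial>step n p (last xs))"
      by (simp add: nn_integral_cmult)
  qed
  also have "\<dots> = (\<integral>\<^sup>+xs. indicator {xs. P xs} xs * (\<integral>\<^sup>+s. (\<integral>\<^sup>+s'. g s' \<partial>step n p s) \<partial>iter n p j (last xs)) \<partial>run n p k)"
    by (rule Suc.IH)
  also have "\<dots> = (\<integral>\<^sup>+xs. indicator {xs. P xs} xs * (\<integral>\<^sup>+s. g s \<partial>iter n p (Suc j) (last xs)) \<partial>run n p k)"
    by simp
  finally show ?case .
qed

lemma run_markov':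
  assumes "k + j \<le> K"
  shows "(\<integral>\<^sup>+xs. indicator {xs. P (take (Suc k) xs)} xs * g (xs ! (k + j)) \<partial>run n p K)
   = (\<integral>\<^sup>+xs. indicator {xs. P xs} xs * (\<integral>\<^sup>+s. g s \<partial>iter n p j (last xs)) \<partial>run n p k)"
proof -
  have "(\<integral>\<^sup>+xs. indicator {xs. P (take (Suc k) xs)} xs * g (xs ! (k + j)) \<partial>run n p K)
      = (\<integral>\<^sup>+xs. indicator {xs. P (take (Suc k) xs)} (take (Suc (k + j)) xs) * g (last (take (Suc (k + j)) xs)) \<partial>run n p K)"
  proof (intro nn_integral_cong_AE, unfold AE_measure_pmf_iff, intro ballI)
    fix xs assume "xs \<in> set_pmf (run n p K)"
    hence len: "length xs = Suc K" by (rule run_length)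
    have "last (take (Suc (k + j)) xs) = xs ! (k + j)"
      using len assms by (simp add: take_Suc_conv_app_nth)
    moreover have "take (Suc k) (take (Suc (k + j)) xs) = take (Suc k) xs" by (simp add: min_def)
    ultimately show "indicator {xs. P (take (Suc k) xs)} xs * g (xs ! (k + j)) =
         indicator {xs. P (take (Suc k) xs)} (take (Suc (k + j)) xs) * g (last (take (Suc (k + j)) xs))"
      by (simp add: indicator_def)
  qed
  also have "\<dots> = (\<integral>\<^sup>+ys. indicator {xs. P (take (Suc k) xs)} ys * g (last ys) \<partial>map_pmf (take (Suc (k + j))) (run n p K))"
    by simp
  also have "\<dots> = (\<integral>\<^sup>+ys. indicator {xs. P (take (Suc k) xs)} ys * g (last ys) \<partial>run n p (k + j))"
    using assms by (simp add: run_take)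
  finally show ?thesis by (simp only: run_markov)
qed

lemma alg1: fixes e D m :: real assumes "0 < e" "0 < D"
  shows "((e-1)/(2*e*D)) * (m/e) + m*(-((e-1)/(2*e*D)) + ((e-1)/(2*e*D))^2 * D) = -m*(e-1)^2/(4*e^2*D)"
  using assms by (simp add: field_simps power2_eq_square)

lemma phase2:
  fixes f :: "config \<Rightarrow> nat" and d :: "nat \<Rightarrow> real"
  assumes closed: "\<forall>s\<in>S. set_pmf (step n p s) \<subseteq> S"
    and mono: "\<forall>s\<in>S. \<forall>s'\<in>set_pmf (step n p s). f s \<le> f s'"
    and Sdef: "\<forall>s\<in>S. L \<le> f s"
    and rate: "\<forall>s\<in>S. f s < T \<longrightarrow> 1 / d (f s) \<le> measure_pmf.prob (step n p s) {s'. Suc (f s) \<le> f s'}"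
    and dpos: "\<forall>j. L \<le> j \<longrightarrow> j < T \<longrightarrow> 0 < d j \<and> d j \<le> D"
    and D1: "1 \<le> D" and s0: "s0 \<in> S"
    and sumle: "(\<Sum>j\<in>{L..<T}. d j) \<le> \<Delta>" and eta: "0 < \<eta>" and m: "(1 + \<eta>) * \<Delta> \<le> real m"
  shows "emeasure (iter n p m s0) {s. f s < T} \<le> ennreal (exp (- real m * \<eta>\<^sup>2 / (4 * (1 + \<eta>)\<^sup>2 * D)))"
proof -
  define \<mu> where "\<mu> = \<eta> / (2 * (1 + \<eta>) * D)"
  have mu0: "0 < \<mu>" using eta D1 by (simp add: \<mu>_def)
  have mu1: "\<mu> \<le> 1"
  proof -
    have h: "2 * (1 + \<eta>) \<le> 2 * (1 + \<eta>) * D" using mult_left_mono[of 1 D "2 * (1 + \<eta>)"] eta D1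
      by simp
    have "\<eta> \<le> 2 * (1 + \<eta>)" using eta by simp
    from this h have "\<eta> \<le> 2 * (1 + \<eta>) * D" by (rule order_trans)
    thus ?thesis using eta D1 by (simp add: \<mu>_def divide_le_eq)
  qed
  define r where "r = 1 - \<mu> + \<mu>\<^sup>2 * D"
  have r0: "0 \<le> r" using mu1 D1 by (simp add: r_def add_nonneg_nonneg)
  have "emeasure (iter n p m s0) {s. f s < T} \<le> ennreal (exp (\<mu> * (\<Sum>j\<in>{L..<T}. d j)) * r ^ m)"
    unfolding r_def by (rule phase[OF closed mono Sdef rate dpos mu0 mu1 _ s0]) (use D1 in simp)
  also have "exp (\<mu> * (\<Sum>j\<in>{L..<T}. d j)) * r ^ m \<le> exp (- real m * \<eta>\<^sup>2 / (4 * (1 + \<eta>)\<^sup>2 * D))"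
  proof -
    have "r \<le> exp (- \<mu> + \<mu>\<^sup>2 * D)" unfolding r_def using exp_ge_add_one_self[of "- \<mu> + \<mu>\<^sup>2 * D"]
      by (simp add: algebra_simps)
    hence "r ^ m \<le> exp (- \<mu> + \<mu>\<^sup>2 * D) ^ m" using r0 by (intro power_mono) auto
    also have "\<dots> = exp (real m * (- \<mu> + \<mu>\<^sup>2 * D))" by (simp add: exp_of_nat_mult[symmetric])
    finally have rm: "r ^ m \<le> exp (real m * (- \<mu> + \<mu>\<^sup>2 * D))" .
    have "\<mu> * (\<Sum>j\<in>{L..<T}. d j) \<le> \<mu> * (real m / (1 + \<eta>))"
    proof -
      have "\<Delta> \<le> real m / (1 + \<eta>)" using m eta by (simp add: field_simps)
      thus ?thesis using sumle mu0 by (intro mult_left_mono) auto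
    qed
    hence "exp (\<mu> * (\<Sum>j\<in>{L..<T}. d j)) * r ^ m \<le> exp (\<mu> * (real m / (1 + \<eta>))) * exp (real m * (- \<mu> + \<mu>\<^sup>2 * D))"
      using rm r0 by (intro mult_mono) auto
    also have "\<dots> = exp (\<mu> * (real m / (1 + \<eta>)) + real m * (- \<mu> + \<mu>\<^sup>2 * D))" by (simp add: exp_add)
    also have "\<mu> * (real m / (1 + \<eta>)) + real m * (- \<mu> + \<mu>\<^sup>2 * D) = - real m * \<eta>\<^sup>2 / (4 * (1 + \<eta>)\<^sup>2 * D)"
    proof -
      have "1 + \<eta> - 1 = \<eta>" by simp
      thus ?thesis using alg1[of "1 + \<eta>" D "real m"] eta D1 unfolding \<mu>_def by simp
    qed
    finally show ?thesis .
  qed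
  hence "ennreal (exp (\<mu> * (\<Sum>j\<in>{L..<T}. d j)) * r ^ m) \<le> ennreal (exp (- real m * \<eta>\<^sup>2 / (4 * (1 + \<eta>)\<^sup>2 * D)))"
    by (rule ennreal_leI)
  finally show ?thesis .
qed

lemma sum_telescope_le:
  fixes x F :: "nat \<Rightarrow> real"
  assumes "a \<le> b" "\<And>k. a \<le> k \<Longrightarrow> k < b \<Longrightarrow> x k \<le> F (Suc k) - F k"
  shows "(\<Sum>k\<in>{a..<b}. x k) \<le> F b - F a"
  using assms
proof (induction b)
  case 0 thus ?case by simp
next
  case (Suc b)
  show ?case
  proof (cases "a = Suc b")
    case True thus ?thesis by simp
  next
    case False
    hence ab: "a \<le> b" using Suc by simp
    have "(\<Sum>k\<in>{a..<Suc b}. x k) = (\<Sum>k\<in>{a..<b}. x k) + x b" using ab by simp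
    also have "\<dots> \<le> (F b - F a) + (F (Suc b) - F b)"
      using Suc.IH[OF ab] Suc.prems ab by (intro add_mono) auto
    finally show ?thesis by simp
  qed
qed

lemma inv_le_ln_diff:
  fixes y :: real
  assumes "1 < y" shows "1 / y \<le> ln y - ln (y - 1)"
proof -
  have "ln ((y - 1) / y) \<le> (y - 1) / y - 1" using assms by (intro ln_le_minus_one) auto
  moreover have "ln ((y - 1) / y) = ln (y - 1) - ln y" using assms by (simp add: ln_div)
  moreover have "(y - 1) / y - 1 = - (1 / y)" using assms by (simp add: field_simps)
  ultimately show ?thesis by simp
qed

lemma div10_bounds: "(n::nat) \<le> 10 * ((n + 9) div 10)" "10 * ((n + 9) div 10) \<le> n + 9"
proof -
  have "10 * ((n + 9) div 10) + (n + 9) mod 10 = n + 9" by simp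
  moreover have "(n + 9) mod 10 < 10" by simp
  ultimately show "(n::nat) \<le> 10 * ((n + 9) div 10)" "10 * ((n + 9) div 10) \<le> n + 9" by linarith+
qed
lemma div2_bounds: "(n::nat) \<le> 2 * ((n + 1) div 2)" "2 * ((n + 1) div 2) \<le> n + 1"
proof -
  have "2 * ((n + 1) div 2) + (n + 1) mod 2 = n + 1" by simp
  moreover have "(n + 1) mod 2 < 2" by simp
  ultimately show "(n::nat) \<le> 2 * ((n + 1) div 2)" "2 * ((n + 1) div 2) \<le> n + 1" by linarith+
qed
lemma div10_le_iff: "((n::nat) + 9) div 10 \<le> c \<longleftrightarrow> n \<le> 10 * c"
  using div10_bounds[of n] by (auto; rule ccontr; linarith)
lemma div2_le_iff: "((n::nat) + 1) div 2 \<le> c \<longleftrightarrow> n \<le> 2 * c"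
  using div2_bounds[of n] by (auto; rule ccontr; linarith)

lemma phaseA:
  fixes p :: real
  assumes n: "200 \<le> n" and p: "0 \<le> p" "p \<le> 1" and s0: "n \<le> 10 * cnt n i s0"
    and eta: "0 < \<eta>" and m: "(1 + \<eta>) * (real n / 2 * ln 10) \<le> real m"
  shows "emeasure (iter n p m s0) {s. cnt n i s < (n + 1) div 2}
         \<le> ennreal (exp (- real m * \<eta>\<^sup>2 / (4 * (1 + \<eta>)\<^sup>2 * 10)))"
proof -
  define L where "L = (n + 9) div 10"
  define T where "T = (n + 1) div 2"
  define S where "S = {s. L \<le> cnt n i s}"
  define d where "d k = real n ^ 2 / (2 * real k * (real n - real k))" for k
  define N where "N = real n"
  have N: "200 \<le> N" using n by (simp add: N_def)
  have Lb: "N \<le> 10 * real L" "10 * real L \<le> N + 9"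
    using div10_bounds[of n] unfolding L_def N_def by linarith+
  have Tb: "N \<le> 2 * real T" "2 * real T \<le> N + 1"
    using div2_bounds[of n] unfolding T_def N_def by linarith+
  have jb: "N / 10 \<le> real j" "real j \<le> (N - 1) / 2" "2 * real j \<le> N - 1"
     "N / 2 \<le> N - real j" "1 < real j" "1 < N - real j" if "L \<le> j" "j < T" for j
  proof -
    have a: "real L \<le> real j" using that by auto
    have c: "real j + 1 \<le> real T" using that by (simp add: Suc_le_eq[symmetric] flip: of_nat_Suc)
    show "N / 10 \<le> real j" using a Lb by linarith
    show "real j \<le> (N - 1) / 2" using c Tb by (simp add: field_simps)
    show j2: "2 * real j \<le> N - 1" using c Tb by linarith
    show "N / 2 \<le> N - real j" using j2 by (simp add: field_simps)
    have "N \<le> 10 * real j" using a Lb by linarith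
    thus "1 < real j" using N by linarith
    show "1 < N - real j" using j2 N by linarith
  qed
  have n2: "2 \<le> n" using n by simp
  show ?thesis unfolding T_def[symmetric]
  proof (rule phase2[where S=S and f="cnt n i" and L=L and T=T and d=d and D=10 and \<Delta>="real n / 2 * ln 10"])
    show "\<forall>s\<in>S. set_pmf (step n p s) \<subseteq> S"
      unfolding S_def using cnt_step_mono by (auto intro: order_trans)
    show "\<forall>s\<in>S. \<forall>s'\<in>set_pmf (step n p s). cnt n i s \<le> cnt n i s'"
      using cnt_step_mono by blast
    show "\<forall>s\<in>S. L \<le> cnt n i s" by (simp add: S_def)
    show "s0 \<in> S" using s0 div10_le_iff by (simp add: S_def L_def)
    show "(1::real) \<le> 10" by simp
    show "0 < \<eta>" by (rule eta)
    show "(1 + \<eta>) * (real n / 2 * ln 10) \<le> real m" by (rule m)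
    show "\<forall>j. L \<le> j \<longrightarrow> j < T \<longrightarrow> 0 < d j \<and> d j \<le> 10"
    proof (intro allI impI)
      fix j assume j: "L \<le> j" "j < T"
      note b = jb[OF j]
      have pos: "0 < real j" "0 < N - real j" using b(5,6) by linarith+
      have "N * N \<le> 20 * real j * (N - real j)"
      proof -
        have "(N / 10) * (N / 2) \<le> real j * (N - real j)"
          using b N by (intro mult_mono) auto
        thus ?thesis by simp
      qed
      thus "0 < d j \<and> d j \<le> 10" using pos N
        by (auto simp: d_def N_def[symmetric] divide_le_eq power2_eq_square)
    qed
    show "\<forall>s\<in>S. cnt n i s < T \<longrightarrow> 1 / d (cnt n i s) \<le> measure_pmf.prob (step n p s) {s'. Suc (cnt n i s) \<le> cnt n i s'}"
    proof (intro ballI impI)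
      fix s assume s: "s \<in> S" and kT: "cnt n i s < T"
      define k where "k = cnt n i s"
      have b: "N / 10 \<le> real k" "real k \<le> (N - 1) / 2" "1 < real k" "1 < N - real k" using jb[of k] s kT by (auto simp: S_def k_def)
      have kn: "k \<le> n" using cnt_le_n by (simp add: k_def)
      have pos: "0 < real k" "0 < N - real k" using b(3,4) by linarith+
      have "1 / d k = 2 * real k * (N - real k) / (N * N)"
        by (simp add: d_def N_def power2_eq_square)
      also have "\<dots> \<le> 2 * real k * (N - real k) / (N * (N - 1))"
        using pos N by (intro divide_left_mono mult_left_mono) auto
      also have "\<dots> = real (2 * k * (n - k)) / (real n * (real n - 1))"
        using kn by (simp add: N_def of_nat_diff)
      also have "\<dots> \<le> measure_pmf.prob (step n p s) {s'. Suc k \<le> cnt n i s'}"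
        unfolding k_def by (rule rateA[OF n2 p])
      finally show "1 / d (cnt n i s) \<le> measure_pmf.prob (step n p s) {s'. Suc (cnt n i s) \<le> cnt n i s'}"
        by (simp add: k_def)
    qed
    show "(\<Sum>j\<in>{L..<T}. d j) \<le> real n / 2 * ln 10"
    proof -
      have LT: "L \<le> T" using Lb Tb N by linarith
      have dsplit: "d j = N / 2 * (1 / real j + 1 / (N - real j))" if "L \<le> j" "j < T" for j
      proof -
        have "0 < real j" "0 < N - real j" using jb(5,6)[OF that] by linarith+
        thus ?thesis by (simp add: d_def N_def[symmetric] field_simps power2_eq_square)
      qed
      have s1: "(\<Sum>j\<in>{L..<T}. 1 / real j) \<le> ln (real T - 1) - ln (real L - 1)"
        using sum_telescope_le[OF LT, of "\<lambda>j. 1 / real j" "\<lambda>k. ln (real k - 1)"]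
      proof -
        have "\<And>k. L \<le> k \<Longrightarrow> k < T \<Longrightarrow> 1 / real k \<le> ln (real (Suc k) - 1) - ln (real k - 1)"
        proof -
          fix k assume "L \<le> k" "k < T"
          hence "1 < real k" using jb(5)[of k] by blast
          thus "1 / real k \<le> ln (real (Suc k) - 1) - ln (real k - 1)" using inv_le_ln_diff by simp
        qed
        thus ?thesis using sum_telescope_le[OF LT, of "\<lambda>j. 1 / real j" "\<lambda>k. ln (real k - 1)"] by simp
      qed
      have s2: "(\<Sum>j\<in>{L..<T}. 1 / (N - real j)) \<le> ln (N - real L) - ln (N - real T)"
      proof -
        have "\<And>k. L \<le> k \<Longrightarrow> k < T \<Longrightarrow> 1 / (N - real k) \<le> - ln (N - real (Suc k)) - - ln (N - real k)"
        proof -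
          fix k assume "L \<le> k" "k < T"
          hence "1 < N - real k" using jb(6)[of k] by blast
          hence "1 / (N - real k) \<le> ln (N - real k) - ln (N - real k - 1)" using inv_le_ln_diff by simp
          thus "1 / (N - real k) \<le> - ln (N - real (Suc k)) - - ln (N - real k)" by (simp add: algebra_simps)
        qed
        thus ?thesis using sum_telescope_le[OF LT, of "\<lambda>j. 1 / (N - real j)" "\<lambda>k. - ln (N - real k)"] by simp
      qed
      have "(\<Sum>j\<in>{L..<T}. d j) = (\<Sum>j\<in>{L..<T}. N / 2 * (1 / real j + 1 / (N - real j)))"
      proof (intro sum.cong refl)
        fix j assume "j \<in> {L..<T}"
        thus "d j = N / 2 * (1 / real j + 1 / (N - real j))" using dsplit[of j] by simp
      qed
      also have "\<dots> = N / 2 * ((\<Sum>j\<in>{L..<T}. 1 / real j) + (\<Sum>j\<in>{L..<T}. 1 / (N - real j)))"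
        by (simp only: sum_distrib_left[symmetric] sum.distrib[symmetric])
      also have "\<dots> \<le> N / 2 * ((ln (real T - 1) - ln (real L - 1)) + (ln (N - real L) - ln (N - real T)))"
        using s1 s2 N by (intro mult_left_mono add_mono) auto
      also have "(ln (real T - 1) - ln (real L - 1)) + (ln (N - real L) - ln (N - real T)) \<le> ln 10"
      proof -
        define t l where "t = real T" and "l = real L"
        have tl: "N \<le> 10 * l" "10 * l \<le> N + 9" "N \<le> 2 * t" "2 * t \<le> N + 1"
          using Lb Tb by (simp_all add: t_def l_def)
        have p1: "(t - 1) * (N - l) \<le> ((N - 1) / 2) * (9 * N / 10)"
          using tl N by (intro mult_mono) auto
        have p2: "((N - 10) / 10) * ((N - 1) / 2) \<le> (l - 1) * (N - t)"
          using tl N by (intro mult_mono) auto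
        have p3: "((N - 1) / 2) * (9 * N / 10) \<le> 10 * (((N - 10) / 10) * ((N - 1) / 2))"
        proof -
          have "0 \<le> (N - 1) * (N - 100)" using N by (intro mult_nonneg_nonneg) auto
          hence h: "0 \<le> N * N - 101 * N + 100" by (simp add: algebra_simps)
          have "((N - 1) / 2) * (9 * N / 10) = (9 * (N * N) - 9 * N) / 20" by (simp add: algebra_simps)
          moreover have "10 * (((N - 10) / 10) * ((N - 1) / 2)) = (10 * (N * N) - 110 * N + 100) / 20"
            by (simp add: algebra_simps)
          moreover have "(9 * (N * N) - 9 * N) / 20 \<le> (10 * (N * N) - 110 * N + 100) / 20"
          proof (rule divide_right_mono)
            show "9 * (N * N) - 9 * N \<le> 10 * (N * N) - 110 * N + 100" using h by argo
          qed simp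
          ultimately show ?thesis by argo
        qed
        have p2': "10 * (((N - 10) / 10) * ((N - 1) / 2)) \<le> 10 * ((l - 1) * (N - t))"
          using p2 by (rule mult_left_mono) simp
        have prod: "(t - 1) * (N - l) \<le> 10 * ((l - 1) * (N - t))"
          using order_trans[OF p1 order_trans[OF p3 p2']] .
        have pos: "0 < t - 1" "0 < l - 1" "0 < N - l" "0 < N - t" using tl N by linarith+
        have "ln ((t - 1) * (N - l)) \<le> ln (10 * ((l - 1) * (N - t)))"
          using prod pos by (subst ln_le_cancel_iff) auto
        hence "ln (t - 1) + ln (N - l) \<le> ln 10 + (ln (l - 1) + ln (N - t))"
          using pos by (simp add: ln_mult)
        thus ?thesis by (simp add: t_def l_def)
      qed
      hence "N / 2 * ((ln (real T - 1) - ln (real L - 1)) + (ln (N - real L) - ln (N - real T))) \<le> N / 2 * ln 10"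
        using N by (intro mult_left_mono) auto
      finally show ?thesis by (simp add: N_def)
    qed
  qed
qed



lemma pf: fixes N x s :: real assumes "0 < x + s * N / 2" "0 < N - x" "0 < s"
  shows "N ^ 2 / ((2 * x + s * N) * (N - x)) = N / (2 + s) * (1 / (x + s * N / 2) + 1 / (N - x))"
proof -
  define A where "A = x + s * N / 2"
  define B where "B = N - x"
  define C where "C = 2 + s"
  have a: "A \<noteq> 0" "B \<noteq> 0" "C \<noteq> 0" using assms by (auto simp: A_def B_def C_def)
  have b: "2 * x + s * N = 2 * A" by (simp add: A_def)
  have c: "A + B = N * C / 2" by (simp add: A_def B_def C_def algebra_simps)
  have "1 / A + 1 / B = (A + B) / (A * B)" using a by (simp add: field_simps)
  also have "\<dots> = N * C / (2 * (A * B))" unfolding c by simp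
  finally have d: "1 / A + 1 / B = N * C / (2 * (A * B))" .
  have "N / C * (N * C / (2 * (A * B))) = N ^ 2 / (2 * A * B)"
    using a by (simp add: field_simps power2_eq_square)
  thus ?thesis unfolding A_def[symmetric] B_def[symmetric] C_def[symmetric] b d
    using a by (simp add: mult.assoc power2_eq_square)
qed

lemma phaseB:
  fixes p :: real
  assumes n: "200 \<le> n" and p: "0 < p" "p \<le> 1" and s0: "n \<le> 2 * cnt n i s0"
    and eta: "0 < \<eta>"
    and m: "(1 + \<eta>) * (real n / 2 * (ln (6/5) + ln (1 + 8 / (5 * p))) + 8 / p) \<le> real m"
  shows "emeasure (iter n p m s0) {s. cnt n (Suc i) s < (n + 9) div 10}
         \<le> ennreal (exp (- real m * \<eta>\<^sup>2 / (4 * (1 + \<eta>)\<^sup>2 * (9 / p))))"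
proof -
  define T where "T = (n + 9) div 10"
  define S where "S = {s. n \<le> 2 * cnt n i s}"
  define N where "N = real n"
  define \<sigma> where "\<sigma> = p / 8"
  define d where "d j = N ^ 2 / ((2 * real j + \<sigma> * N) * (N - real j))" for j
  have N: "200 \<le> N" using n by (simp add: N_def)
  have sig: "0 < \<sigma>" "\<sigma> \<le> 1/8" using p by (auto simp: \<sigma>_def)
  have Tb: "N \<le> 10 * real T" "10 * real T \<le> N + 9"
    using div10_bounds[of n] unfolding T_def N_def by linarith+
  have jb: "10 * real j \<le> N - 1" "0 \<le> real j" "1 < N - real j" "9 * N \<le> 10 * (N - real j)" if "j < T" for j
  proof -
    have c: "real j + 1 \<le> real T" using that by (simp add: Suc_le_eq[symmetric] flip: of_nat_Suc)
    show j10: "10 * real j \<le> N - 1" using c Tb by linarith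
    show "0 \<le> real j" by simp
    show "1 < N - real j" using j10 N by linarith
    show "9 * N \<le> 10 * (N - real j)" using j10 by argo
  qed
  have n2: "2 \<le> n" using n by simp
  have p': "0 \<le> p" "p \<le> 1" using p by auto
  show ?thesis unfolding T_def[symmetric]
  proof (rule phase2[where S=S and f="cnt n (Suc i)" and L=0 and T=T and d=d and D="9/p"
        and \<Delta>="real n / 2 * (ln (6/5) + ln (1 + 8 / (5 * p))) + 8 / p"])
    show "\<forall>s\<in>S. set_pmf (step n p s) \<subseteq> S"
      unfolding S_def using cnt_step_mono by (auto intro: order_trans)
    show "\<forall>s\<in>S. \<forall>s'\<in>set_pmf (step n p s). cnt n (Suc i) s \<le> cnt n (Suc i) s'"
      using cnt_step_mono by blast
    show "\<forall>s\<in>S. 0 \<le> cnt n (Suc i) s" by simp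
    show "s0 \<in> S" using s0 by (simp add: S_def)
    show "1 \<le> 9 / p" using p by (simp add: field_simps)
    show "0 < \<eta>" by (rule eta)
    show "(1 + \<eta>) * (real n / 2 * (ln (6/5) + ln (1 + 8 / (5 * p))) + 8 / p) \<le> real m" by (rule m)
    show "\<forall>j. 0 \<le> j \<longrightarrow> j < T \<longrightarrow> 0 < d j \<and> d j \<le> 9 / p"
    proof (intro allI impI)
      fix j assume j: "0 \<le> j" "j < T"
      note b = jb[OF j(2)]
      have pos1: "0 < 2 * real j + \<sigma> * N" using sig N b by (intro add_nonneg_pos) auto
      have pos2: "0 < N - real j" using b by linarith
      have sl: "\<sigma> * N \<le> 2 * real j + \<sigma> * N" by simp
      have "\<sigma> * N * (9 * N) \<le> (2 * real j + \<sigma> * N) * (10 * (N - real j))"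
        using pos1 sig N by (intro mult_mono[OF sl b(4)]) auto
      hence "9 * (\<sigma> * (N * N)) \<le> 10 * ((2 * real j + \<sigma> * N) * (N - real j))"
        by (simp add: algebra_simps)
      hence "9 * (p * (N * N)) \<le> 80 * ((2 * real j + \<sigma> * N) * (N - real j))"
        by (simp add: \<sigma>_def)
      moreover have "0 < (2 * real j + \<sigma> * N) * (N - real j)" using pos1 pos2 by simp
      ultimately have "p * (N * N) \<le> 9 * ((2 * real j + \<sigma> * N) * (N - real j))" by argo
      hence "N ^ 2 / ((2 * real j + \<sigma> * N) * (N - real j)) \<le> 9 / p"
        using pos1 pos2 p by (simp add: divide_simps power2_eq_square mult.commute)
      moreover have "0 < N ^ 2 / ((2 * real j + \<sigma> * N) * (N - real j))"
        using pos1 pos2 N by simp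
      ultimately show "0 < d j \<and> d j \<le> 9 / p" by (simp add: d_def)
    qed
    show "\<forall>s\<in>S. cnt n (Suc i) s < T \<longrightarrow> 1 / d (cnt n (Suc i) s) \<le> measure_pmf.prob (step n p s) {s'. Suc (cnt n (Suc i) s) \<le> cnt n (Suc i) s'}"
    proof (intro ballI impI)
      fix s assume s: "s \<in> S" and jT: "cnt n (Suc i) s < T"
      define j where "j = cnt n (Suc i) s"
      define a where "a = cnt n i s"
      have ja: "j \<le> a" using cnt_Suc_le by (simp add: j_def a_def)
      have jn: "j \<le> n" using cnt_le_n by (simp add: j_def)
      have a2: "N \<le> 2 * real a" using s by (simp add: S_def a_def N_def)
      note b = jb[OF jT[folded j_def]]
      define U where "U = real a - real j"
      have U: "2 * N \<le> 5 * U" using a2 b unfolding U_def by argo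
      have U1: "1 \<le> U" using U N by linarith
      have realU: "real ((a - j) * (a - j - 1)) = U * (U - 1)"
      proof -
        have "1 \<le> a - j" using U1 ja unfolding U_def by linarith
        thus ?thesis using ja by (simp add: U_def of_nat_diff)
      qed
      have pos1: "0 < 2 * real j + \<sigma> * N" using sig N b by (intro add_nonneg_pos) auto
      have pos2: "0 < N - real j" using b by linarith
      have key: "\<sigma> * N * (N - real j) \<le> p * (U * (U - 1))"
      proof -
        have "\<sigma> * N * (N - real j) \<le> \<sigma> * N * N"
          using sig N b by (intro mult_left_mono) auto
        also have "\<dots> = p * (N * N / 8)" by (simp add: \<sigma>_def)
        also have "N * N / 8 \<le> U * (U - 1)"
        proof -
          have u1: "2 * N - 5 \<le> 5 * U - 5" using U by argo
          have u2: "0 \<le> 5 * U" "0 \<le> 2 * N - 5" using U1 N by argo+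
          have "(2 * N) * (2 * N - 5) \<le> (5 * U) * (5 * U - 5)"
            by (rule mult_mono[OF U u1 u2])
          moreover have "25 * (N * N) \<le> 8 * ((2 * N) * (2 * N - 5))"
          proof -
            have "0 \<le> N * (7 * N - 80)" using N by (intro mult_nonneg_nonneg) auto
            thus ?thesis by (simp add: algebra_simps)
          qed
          ultimately have "25 * (N * N) \<le> 8 * ((5 * U) * (5 * U - 5))" by argo
          thus ?thesis by (simp add: algebra_simps)
        qed
        hence "p * (N * N / 8) \<le> p * (U * (U - 1))" using p by (intro mult_left_mono) auto
        finally show ?thesis .
      qed
      have X0: "0 \<le> 2 * real j * (N - real j) + p * (U * (U - 1))"
        using pos2 U1 p by (intro add_nonneg_nonneg mult_nonneg_nonneg) auto
      have "1 / d j = (2 * real j + \<sigma> * N) * (N - real j) / (N * N)"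
        by (simp add: d_def power2_eq_square)
      also have "\<dots> \<le> (2 * real j * (N - real j) + p * (U * (U - 1))) / (N * N)"
        using key N by (intro divide_right_mono) (auto simp: algebra_simps)
      also have "\<dots> \<le> (2 * real j * (N - real j) + p * (U * (U - 1))) / (N * (N - 1))"
        using X0 N by (intro divide_left_mono mult_left_mono) auto
      also have "\<dots> = (real (2 * j * (n - j)) + p * real ((a - j) * (a - j - 1))) / (real n * (real n - 1))"
        using jn realU by (simp add: N_def of_nat_diff)
      also have "\<dots> \<le> measure_pmf.prob (step n p s) {s'. Suc j \<le> cnt n (Suc i) s'}"
        unfolding j_def a_def by (rule rateB[OF n2 p'])
      finally show "1 / d (cnt n (Suc i) s) \<le> measure_pmf.prob (step n p s) {s'. Suc (cnt n (Suc i) s) \<le> cnt n (Suc i) s'}"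
        by (simp add: j_def)
    qed
    show "(\<Sum>j\<in>{0..<T}. d j) \<le> real n / 2 * (ln (6/5) + ln (1 + 8 / (5 * p))) + 8 / p"
    proof -
      define c where "c = \<sigma> * N / 2"
      have c0: "0 < c" using sig N by (simp add: c_def)
      have T1: "1 \<le> T" using Tb N by (simp add: field_simps)
      have dle: "d j \<le> N / 2 * (1 / (real j + c) + 1 / (N - real j))" if "j < T" for j
      proof -
        note b = jb[OF that]
        have pos1: "0 < real j + c" using c0 by simp
        have pos2: "0 < N - real j" using b by linarith
        have "d j = N / (2 + \<sigma>) * (1 / (real j + c) + 1 / (N - real j))"
          using pf[of "real j" \<sigma> N] pos1 pos2 sig unfolding d_def c_def by simp
        also have "\<dots> \<le> N / 2 * (1 / (real j + c) + 1 / (N - real j))"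
          using pos1 pos2 N sig by (intro mult_right_mono divide_left_mono) auto
        finally show ?thesis .
      qed
      have s1: "(\<Sum>j\<in>{0..<T}. 1 / (real j + c)) \<le> 1 / c + (ln (real T - 1 + c) - ln c)"
      proof -
        have "(\<Sum>j\<in>{0..<T}. 1 / (real j + c)) = 1 / c + (\<Sum>j\<in>{1..<T}. 1 / (real j + c))"
          using T1 by (subst sum.atLeast_Suc_lessThan) auto
        moreover have "(\<Sum>j\<in>{1..<T}. 1 / (real j + c)) \<le> ln (real T - 1 + c) - ln (real 1 - 1 + c)"
        proof (rule sum_telescope_le[OF T1])
          fix k assume "1 \<le> k" "k < T"
          hence "1 < real k + c" using c0 by linarith
          hence "1 / (real k + c) \<le> ln (real k + c) - ln (real k + c - 1)" by (rule inv_le_ln_diff)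
          thus "1 / (real k + c) \<le> ln (real (Suc k) - 1 + c) - ln (real k - 1 + c)" by (simp add: algebra_simps)
        qed
        ultimately show ?thesis by simp
      qed
      have s2: "(\<Sum>j\<in>{0..<T}. 1 / (N - real j)) \<le> ln N - ln (N - real T)"
      proof -
        have "(\<Sum>j\<in>{0..<T}. 1 / (N - real j)) \<le> - ln (N - real T) - - ln (N - real 0)"
        proof (rule sum_telescope_le)
          fix k assume "0 \<le> k" "k < T"
          hence "1 < N - real k" using jb by blast
          hence "1 / (N - real k) \<le> ln (N - real k) - ln (N - real k - 1)" by (rule inv_le_ln_diff)
          thus "1 / (N - real k) \<le> - ln (N - real (Suc k)) - - ln (N - real k)" by (simp add: algebra_simps)
        qed simp
        thus ?thesis by simp
      qed
      have "(\<Sum>j\<in>{0..<T}. d j) \<le> (\<Sum>j\<in>{0..<T}. N / 2 * (1 / (real j + c) + 1 / (N - real j)))"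
        by (intro sum_mono dle) auto
      also have "\<dots> = N / 2 * ((\<Sum>j\<in>{0..<T}. 1 / (real j + c)) + (\<Sum>j\<in>{0..<T}. 1 / (N - real j)))"
        by (simp only: sum_distrib_left[symmetric] sum.distrib[symmetric])
      also have "\<dots> \<le> N / 2 * ((1 / c + (ln (real T - 1 + c) - ln c)) + (ln N - ln (N - real T)))"
        using s1 s2 N by (intro mult_left_mono add_mono) auto
      also have "\<dots> = N / 2 * (1 / c) + N / 2 * ((ln (real T - 1 + c) - ln c) + (ln N - ln (N - real T)))"
        by (simp add: algebra_simps)
      also have "N / 2 * (1 / c) = 8 / p" using N p by (simp add: c_def \<sigma>_def field_simps)
      also have "(ln (real T - 1 + c) - ln c) + (ln N - ln (N - real T)) \<le> ln (6/5) + ln (1 + 8 / (5 * p))"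
      proof -
        have T0: "0 \<le> real T - 1" using T1 by simp
        have a1: "ln (real T - 1 + c) - ln c = ln (1 + (real T - 1) / c)"
        proof -
          have "1 + (real T - 1) / c = (real T - 1 + c) / c" using c0 by (simp add: field_simps)
          moreover have "0 < real T - 1 + c" using c0 T0 by simp
          ultimately show ?thesis using c0 by (simp add: ln_div)
        qed
        have "(real T - 1) / c \<le> (N / 10) / c"
          using Tb c0 by (intro divide_right_mono) linarith+
        also have "(N / 10) / c = 8 / (5 * p)" using N p by (simp add: c_def \<sigma>_def field_simps)
        finally have "ln (1 + (real T - 1) / c) \<le> ln (1 + 8 / (5 * p))"
          using c0 T0 p by (subst ln_le_cancel_iff) (auto intro: add_pos_nonneg)
        moreover have "ln N - ln (N - real T) \<le> ln (6/5)"
        proof -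
          have NT: "0 < N - real T" "6 * real T \<le> N" using Tb N by linarith+
          have "ln N - ln (N - real T) = ln (N / (N - real T))" using NT N by (simp add: ln_div)
          also have "\<dots> \<le> ln (6/5)"
            using NT N by (subst ln_le_cancel_iff) (auto simp: field_simps)
          finally show ?thesis .
        qed
        ultimately show ?thesis using a1 by linarith
      qed
      hence "N / 2 * ((ln (real T - 1 + c) - ln c) + (ln N - ln (N - real T))) \<le> N / 2 * (ln (6/5) + ln (1 + 8 / (5 * p)))"
        using N by (intro mult_left_mono) auto
      finally show ?thesis by (simp add: N_def algebra_simps)
    qed
  qed
qed

lemma not_frac_ge_iff: "\<not> frac_ge n j s \<longleftrightarrow> cnt n j s < (n + 9) div 10"
  by (simp add: frac_ge_cnt div10_le_iff[symmetric] not_le)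

lemma chain:
  fixes p :: real
  assumes n: "200 \<le> n" and p: "0 < p" "p \<le> 1" and eta: "0 < \<eta>"
    and mA: "(1 + \<eta>) * (real n / 2 * ln 10) \<le> real mA"
    and mB: "(1 + \<eta>) * (real n / 2 * (ln (6/5) + ln (1 + 8 / (5 * p))) + 8 / p) \<le> real mB"
    and s0: "frac_ge n i s0"
  shows "emeasure (iter n p (mA + mB) s0) {s. \<not> frac_ge n (Suc i) s}
     \<le> ennreal (exp (- real mA * \<eta>\<^sup>2 / (4 * (1 + \<eta>)\<^sup>2 * 10)) + exp (- real mB * \<eta>\<^sup>2 / (4 * (1 + \<eta>)\<^sup>2 * (9 / p))))"
proof -
  define eA where "eA = exp (- real mA * \<eta>\<^sup>2 / (4 * (1 + \<eta>)\<^sup>2 * 10))"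
  define eB where "eB = exp (- real mB * \<eta>\<^sup>2 / (4 * (1 + \<eta>)\<^sup>2 * (9 / p)))"
  have p': "0 \<le> p" "p \<le> 1" using p by auto
  have pt: "emeasure (iter n p mB s) {s. \<not> frac_ge n (Suc i) s} \<le> indicator {s. cnt n i s < (n + 1) div 2} s + ennreal eB" for s
  proof (cases "cnt n i s < (n + 1) div 2")
    case True
    have "emeasure (iter n p mB s) {s. \<not> frac_ge n (Suc i) s} \<le> 1"
      by (simp add: measure_pmf.emeasure_le_1)
    thus ?thesis using True by (simp add: add_increasing2)
  next
    case False
    hence s2: "n \<le> 2 * cnt n i s" using div2_le_iff by (simp add: not_less)
    have "emeasure (iter n p mB s) {s. \<not> frac_ge n (Suc i) s} = emeasure (iter n p mB s) {s. cnt n (Suc i) s < (n + 9) div 10}"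
      by (simp add: not_frac_ge_iff)
    also have "\<dots> \<le> ennreal eB" unfolding eB_def by (rule phaseB[OF n p s2 eta mB])
    finally show ?thesis by (simp add: False add_increasing)
  qed
  have "emeasure (iter n p (mA + mB) s0) {s. \<not> frac_ge n (Suc i) s}
      = (\<integral>\<^sup>+s. emeasure (iter n p mB s) {s. \<not> frac_ge n (Suc i) s} \<partial>iter n p mA s0)"
    by (simp add: iter_add)
  also have "\<dots> \<le> (\<integral>\<^sup>+s. indicator {s. cnt n i s < (n + 1) div 2} s + ennreal eB \<partial>iter n p mA s0)"
    by (intro nn_integral_mono pt)
  also have "\<dots> = emeasure (iter n p mA s0) {s. cnt n i s < (n + 1) div 2} + ennreal eB"
    by (subst nn_integral_add) (auto simp: measure_pmf.emeasure_space_1)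
  also have "\<dots> \<le> ennreal eA + ennreal eB"
    using phaseA[OF n p' _ eta mA] s0 by (intro add_right_mono) (simp add: eA_def frac_ge_cnt)
  also have "\<dots> = ennreal (eA + eB)" by (simp add: eA_def eB_def ennreal_plus)
  finally show ?thesis by (simp add: eA_def eB_def)
qed

lemma first_hit_take: "first_hit n i xs k \<Longrightarrow> first_hit n i (take (Suc k) xs) k"
  by (auto simp: first_hit_def)

lemma fail_bound:
  assumes eps: "\<And>s. frac_ge n i s \<Longrightarrow> emeasure (iter n p M s) {s'. \<not> frac_ge n (Suc i) s'} \<le> ennreal \<epsilon>"
    and M: "real M \<le> c * real n" and e0: "0 \<le> \<epsilon>"
  shows "measure_pmf.prob (run n p (horizon n c N)) {xs. gap_fail n i c N xs} \<le> \<epsilon>"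
proof -
  define K where "K = horizon n c N"
  define P where "P k xs = first_hit n i xs k" for k xs
  define B where "B k = {xs. P k (take (Suc k) xs)}" for k
  define Ev where "Ev k = {xs. P k (take (Suc k) xs) \<and> \<not> frac_ge n (Suc i) (xs ! (k + M))}" for k
  have MK: "M \<le> nat \<lceil>c * real n\<rceil>"
  proof -
    have "real M \<le> real_of_int \<lceil>c * real n\<rceil>" using M by linarith
    thus ?thesis by linarith
  qed
  hence NK: "k + M \<le> K" if "k \<le> N" for k using that by (simp add: K_def horizon_def)
  have sub: "{xs. gap_fail n i c N xs} \<inter> set_pmf (run n p K) \<subseteq> (\<Union>k\<in>{..N}. Ev k)"
  proof
    fix xs assume xs: "xs \<in> {xs. gap_fail n i c N xs} \<inter> set_pmf (run n p K)"
    hence len: "length xs = Suc K" using run_length by blast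
    from xs obtain k where k: "k \<le> N" "first_hit n i xs k"
      and no: "\<not> (\<exists>k'. k' < length xs \<and> real k' \<le> real k + c * real n \<and> frac_ge n (Suc i) (xs ! k'))"
      by (auto simp: gap_fail_def)
    have "k + M < length xs" using NK[OF k(1)] len by simp
    moreover have "real (k + M) \<le> real k + c * real n" using M by simp
    ultimately have "\<not> frac_ge n (Suc i) (xs ! (k + M))" using no by blast
    moreover have "first_hit n i (take (Suc k) xs) k" using k(2) by (rule first_hit_take)
    ultimately have "xs \<in> Ev k" by (simp add: Ev_def P_def)
    thus "xs \<in> (\<Union>k\<in>{..N}. Ev k)" using k(1) by blast
  qed
  have Evb: "emeasure (run n p K) (Ev k) \<le> ennreal \<epsilon> * emeasure (run n p K) (B k)" if k: "k \<le> N" for k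
  proof -
    have "emeasure (run n p K) (Ev k) = (\<integral>\<^sup>+xs. indicator {xs. P k (take (Suc k) xs)} xs * indicator {s. \<not> frac_ge n (Suc i) s} (xs ! (k + M)) \<partial>run n p K)"
    proof -
      have "emeasure (run n p K) (Ev k) = (\<integral>\<^sup>+xs. indicator (Ev k) xs \<partial>run n p K)" by simp
      also have "\<dots> = (\<integral>\<^sup>+xs. indicator {xs. P k (take (Suc k) xs)} xs * indicator {s. \<not> frac_ge n (Suc i) s} (xs ! (k + M)) \<partial>run n p K)"
        by (intro nn_integral_cong) (simp add: Ev_def indicator_def)
      finally show ?thesis .
    qed
    also have "\<dots> = (\<integral>\<^sup>+xs. indicator {xs. P k xs} xs * (\<integral>\<^sup>+s. indicator {s. \<not> frac_ge n (Suc i) s} s \<partial>iter n p M (last xs)) \<partial>run n p k)"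
      by (rule run_markov'[OF NK[OF k]])
    also have "\<dots> \<le> (\<integral>\<^sup>+xs. indicator {xs. P k xs} xs * ennreal \<epsilon> \<partial>run n p k)"
    proof (intro nn_integral_mono_AE, unfold AE_measure_pmf_iff, intro ballI)
      fix xs assume xs: "xs \<in> set_pmf (run n p k)"
      hence len: "length xs = Suc k" by (rule run_length)
      show "indicator {xs. P k xs} xs * (\<integral>\<^sup>+s. indicator {s. \<not> frac_ge n (Suc i) s} s \<partial>iter n p M (last xs))
            \<le> indicator {xs. P k xs} xs * ennreal \<epsilon>"
      proof (cases "P k xs")
        case True
        hence "frac_ge n i (xs ! k)" by (simp add: P_def first_hit_def)
        moreover have "last xs = xs ! k"
        proof -
          have "xs \<noteq> []" using len by auto
          thus ?thesis using len by (simp add: last_conv_nth)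
        qed
        ultimately have "frac_ge n i (last xs)" by simp
        hence "emeasure (iter n p M (last xs)) {s. \<not> frac_ge n (Suc i) s} \<le> ennreal \<epsilon>" by (rule eps)
        thus ?thesis using True by simp
      qed simp
    qed
    also have "\<dots> = ennreal \<epsilon> * emeasure (run n p k) {xs. P k xs}"
      by (subst nn_integral_cmult_indicator[symmetric]) (auto simp: mult.commute)
    also have "emeasure (run n p k) {xs. P k xs} = emeasure (run n p K) (B k)"
    proof -
      have "emeasure (run n p K) (B k) = (\<integral>\<^sup>+xs. indicator {xs. P k (take (Suc k) xs)} xs * (\<lambda>_. 1) (xs ! (k + 0)) \<partial>run n p K)"
        by (simp add: B_def)
      also have "\<dots> = (\<integral>\<^sup>+xs. indicator {xs. P k xs} xs * (\<integral>\<^sup>+s. 1 \<partial>iter n p 0 (last xs)) \<partial>run n p k)"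
        by (rule run_markov') (use NK[OF k] in simp)
      also have "\<dots> = emeasure (run n p k) {xs. P k xs}" by simp
      finally show ?thesis by simp
    qed
    finally show ?thesis .
  qed
  have disj: "disjoint_family_on B {..N}"
  proof (unfold disjoint_family_on_def, intro ballI impI)
    fix k k' assume "k \<in> {..N}" "k' \<in> {..N}" "k \<noteq> k'"
    show "B k \<inter> B k' = {}"
    proof (rule ccontr)
      assume "B k \<inter> B k' \<noteq> {}"
      then obtain xs where xs: "P k (take (Suc k) xs)" "P k' (take (Suc k') xs)" by (auto simp: B_def)
      have a: "frac_ge n i (xs ! k)" "frac_ge n i (xs ! k')" using xs by (auto simp: P_def first_hit_def)
      show False
      proof (cases "k < k'")
        case True
        hence "\<not> frac_ge n i (take (Suc k') xs ! k)" using xs(2) by (auto simp: P_def first_hit_def)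
        thus False using a True by simp
      next
        case False
        hence "k' < k" using \<open>k \<noteq> k'\<close> by simp
        hence "\<not> frac_ge n i (take (Suc k) xs ! k')" using xs(1) by (auto simp: P_def first_hit_def)
        thus False using a \<open>k' < k\<close> by simp
      qed
    qed
  qed
  have "emeasure (run n p K) {xs. gap_fail n i c N xs} = emeasure (run n p K) ({xs. gap_fail n i c N xs} \<inter> set_pmf (run n p K))"
    by (simp add: emeasure_Int_set_pmf)
  also have "\<dots> \<le> emeasure (run n p K) (\<Union>k\<in>{..N}. Ev k)"
    by (rule emeasure_mono[OF sub]) simp
  also have "\<dots> \<le> (\<Sum>k\<in>{..N}. emeasure (run n p K) (Ev k))"
    by (rule emeasure_subadditive_finite) auto
  also have "\<dots> \<le> (\<Sum>k\<in>{..N}. ennreal \<epsilon> * emeasure (run n p K) (B k))"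
    by (intro sum_mono Evb) simp
  also have "\<dots> = ennreal \<epsilon> * emeasure (run n p K) (\<Union>k\<in>{..N}. B k)"
    by (simp add: sum_distrib_left[symmetric] sum_emeasure[OF _ disj])
  also have "\<dots> \<le> ennreal \<epsilon> * 1"
    by (intro mult_left_mono) (auto simp: measure_pmf.emeasure_le_1)
  finally have "emeasure (run n p K) {xs. gap_fail n i c N xs} \<le> ennreal \<epsilon>" by simp
  thus ?thesis using e0 by (simp add: K_def measure_pmf.emeasure_eq_measure)
qed

lemma ln_156: "ln (156/5 :: real) \<le> 39/10"
proof -
  have "(199/160 :: real) ^ 16 \<le> exp (39/160) ^ 16"
    using exp_ge_add_one_self[of "39/160 :: real"] by (intro power_mono) auto
  also have "\<dots> = exp (39/10)" by (simp flip: exp_of_nat_mult)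
  finally have h: "(199/160 :: real) ^ 16 \<le> exp (39/10)" .
  have "(156/5::real) \<le> (199/160) ^ 16" unfolding power_divide by simp
  hence "156/5 \<le> exp (39/10 :: real)" using h by linarith
  hence "ln (156/5 :: real) \<le> ln (exp (39/10))" by (subst ln_le_cancel_iff) auto
  thus ?thesis by simp
qed
lemma ln10: "1 \<le> ln (10::real)"
proof -
  have "exp 1 \<le> (10::real)" using exp_le by simp
  hence "ln (exp 1) \<le> ln (10::real)" by (subst ln_le_cancel_iff) auto
  thus ?thesis by simp
qed
lemma ln_half: "2 \<le> x \<Longrightarrow> 1/2 \<le> ln (x::real)"
proof -
  assume x: "2 \<le> x"
  have "exp (1/2::real) ^ 2 = exp 1" by (simp flip: exp_of_nat_mult)
  also have "\<dots> \<le> 2 ^ 2" using exp_le by simp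
  finally have "exp (1/2::real) \<le> 2" by (rule power2_le_imp_le) simp
  hence "exp (1/2) \<le> x" using x by simp
  hence "ln (exp (1/2)) \<le> ln x" using x by (subst ln_le_cancel_iff) auto
  thus ?thesis by simp
qed

theorem mainTheorem2:
  fixes p :: real
  assumes "0 < p" and "p \<le> 1"
  shows "\<forall>d e :: nat. \<exists>n0. \<forall>n\<ge>n0. \<forall>i. real i \<le> real n ^ d \<longrightarrow> (\<forall>N.
           measure_pmf.prob (run n p (horizon n (211/100 + ln (1/p) / 2) N))
             {xs. gap_fail n i (211/100 + ln (1/p) / 2) N xs}
           \<le> 1 / real n ^ e)"
proof (intro allI)
  fix d e :: nat
  have p: "0 < p" "p \<le> 1" using assms by auto
  define Lp where "Lp = ln (1/p)"
  define \<eta> where "\<eta> = 1 / (5 * (39/10 + Lp))"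
  define \<kappa> where "\<kappa> = \<eta>\<^sup>2 * p / (160 * (1 + \<eta>)\<^sup>2)"
  have Lp0: "0 \<le> Lp" using p by (simp add: Lp_def)
  have eta: "0 < \<eta>" "\<eta> \<le> 1" using Lp0 by (auto simp: \<eta>_def field_simps)
  have kappa: "0 < \<kappa>" using eta p by (simp add: \<kappa>_def)
  have lim: "(\<lambda>n. real n ^ e * exp (- \<kappa> * real n)) \<longlonglongrightarrow> 0"
    using kappa by real_asymp
  have "eventually (\<lambda>n. real n ^ e * exp (- \<kappa> * real n) < 1/2) sequentially"
    using order_tendstoD(2)[OF lim, of "1/2"] by simp
  then obtain n3 where n3: "\<And>n. n \<ge> n3 \<Longrightarrow> real n ^ e * exp (- \<kappa> * real n) < 1/2"
    unfolding eventually_sequentially by blast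
  define n0 where "n0 = max (max 200 (nat \<lceil>20 * (16 / p + 2)\<rceil>)) n3"
  show "\<exists>n0. \<forall>n\<ge>n0. \<forall>i. real i \<le> real n ^ d \<longrightarrow> (\<forall>N.
           measure_pmf.prob (run n p (horizon n (211/100 + ln (1/p) / 2) N))
             {xs. gap_fail n i (211/100 + ln (1/p) / 2) N xs}
           \<le> 1 / real n ^ e)"
  proof (intro exI[of _ n0] allI impI)
    fix n i N assume nn0: "n0 \<le> n" and "real i \<le> real n ^ d"
    have n: "200 \<le> n" using nn0 by (simp add: n0_def)
    have nbig: "20 * (16 / p + 2) \<le> real n"
    proof -
      have "nat \<lceil>20 * (16 / p + 2)\<rceil> \<le> n" using nn0 by (simp add: n0_def)
      thus ?thesis by linarith
    qed
    have nexp: "real n ^ e * exp (- \<kappa> * real n) < 1/2" using nn0 n3 by (simp add: n0_def)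
    define DA where "DA = real n / 2 * ln 10"
    define DB where "DB = real n / 2 * (ln (6/5) + ln (1 + 8 / (5 * p))) + 8 / p"
    define mA where "mA = nat \<lceil>(1 + \<eta>) * DA\<rceil>"
    define mB where "mB = nat \<lceil>(1 + \<eta>) * DB\<rceil>"
    have ln10': "1 \<le> ln (10::real)" by (rule ln10)
    have lnB: "1/2 \<le> ln (1 + 8 / (5 * p))"
    proof (rule ln_half)
      have "1 \<le> 8 / (5 * p)" using p by (simp add: field_simps)
      thus "2 \<le> 1 + 8 / (5 * p)" by simp
    qed
    have ln65: "0 \<le> ln (6/5::real)" by simp
    have DA0: "real n / 2 \<le> DA" using ln10' n unfolding DA_def by simp
    have DB0: "real n / 4 \<le> DB"
    proof -
      have h: "1/2 \<le> ln (6/5) + ln (1 + 8 / (5 * p))" using lnB ln65 by linarith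
      have "real n / 2 * (1/2) \<le> real n / 2 * (ln (6/5) + ln (1 + 8 / (5 * p)))"
        using h by (intro mult_left_mono) auto
      moreover have "0 < 8 / p" using p by simp
      ultimately show ?thesis unfolding DB_def by linarith
    qed
    have mA1: "(1 + \<eta>) * DA \<le> real mA" unfolding mA_def by linarith
    have mB1: "(1 + \<eta>) * DB \<le> real mB" unfolding mB_def by linarith
    have mA2: "real mA \<le> (1 + \<eta>) * DA + 1"
    proof -
      have "0 \<le> (1 + \<eta>) * DA" using DA0 eta by simp
      thus ?thesis unfolding mA_def by linarith
    qed
    have mB2: "real mB \<le> (1 + \<eta>) * DB + 1"
    proof -
      have "0 \<le> (1 + \<eta>) * DB" using DB0 eta n by (intro mult_nonneg_nonneg) auto
      thus ?thesis unfolding mB_def by linarith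
    qed
    have window: "real (mA + mB) \<le> (211/100 + ln (1/p) / 2) * real n"
    proof -
      have x0: "0 < 1 + 8 / (5 * p)" using p by (simp add: add_pos_pos)
      have l12: "ln (12::real) = ln 10 + ln (6/5)" using ln_mult[of "10::real" "6/5"] by simp
      have "ln (12 * (1 + 8 / (5 * p))) = ln 12 + ln (1 + 8 / (5 * p))"
        using x0 by (intro ln_mult_pos) auto
      hence "ln 10 + (ln (6/5) + ln (1 + 8 / (5 * p))) = ln (12 * (1 + 8 / (5 * p)))"
        using l12 by simp
      also have "\<dots> \<le> ln (156/5 * (1/p))"
      proof (subst ln_le_cancel_iff)
        show "12 * (1 + 8 / (5 * p)) \<le> 156 / 5 * (1 / p)" using p by (simp add: field_simps)
      qed (use p in \<open>auto intro: add_pos_pos\<close>)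
      also have "\<dots> = ln (156/5) + Lp" using p unfolding Lp_def by (intro ln_mult_pos) auto
      also have "\<dots> \<le> 39/10 + Lp" using ln_156 by simp
      finally have S: "ln 10 + (ln (6/5) + ln (1 + 8 / (5 * p))) \<le> 39/10 + Lp" .
      have "DA + DB = real n / 2 * (ln 10 + (ln (6/5) + ln (1 + 8 / (5 * p)))) + 8 / p"
        by (simp add: DA_def DB_def algebra_simps)
      also have "\<dots> \<le> real n / 2 * (39/10 + Lp) + 8 / p"
        using S by (intro add_right_mono mult_left_mono) auto
      finally have DAB: "DA + DB \<le> real n / 2 * (39/10 + Lp) + 8 / p" .
      have "real (mA + mB) \<le> (1 + \<eta>) * (DA + DB) + 2" using mA2 mB2 by (simp add: algebra_simps)
      also have "\<dots> \<le> (1 + \<eta>) * (real n / 2 * (39/10 + Lp) + 8 / p) + 2"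
        using DAB eta by (intro add_right_mono mult_left_mono) auto
      also have "\<dots> = real n / 2 * (39/10 + Lp) + \<eta> * (real n / 2 * (39/10 + Lp)) + (1 + \<eta>) * (8 / p) + 2"
        by (simp add: algebra_simps add_divide_distrib)
      also have "\<eta> * (real n / 2 * (39/10 + Lp)) = real n / 10"
        using Lp0 by (simp add: \<eta>_def field_simps)
      also have "(1 + \<eta>) * (8 / p) \<le> 2 * (8 / p)"
        using eta p by (intro mult_right_mono) auto
      finally have "real (mA + mB) \<le> real n / 2 * (39/10 + Lp) + real n / 10 + 2 * (8 / p) + 2" by simp
      moreover have "2 * (8 / p) + 2 \<le> real n / 20" using nbig by simp
      ultimately have "real (mA + mB) \<le> real n * (21/10 + Lp / 2)" by (simp add: algebra_simps)
      also have "\<dots> \<le> real n * (211/100 + Lp / 2)" by (intro mult_left_mono) auto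
      finally show ?thesis by (simp add: Lp_def mult.commute)
    qed
    define eA where "eA = exp (- real mA * \<eta>\<^sup>2 / (4 * (1 + \<eta>)\<^sup>2 * 10))"
    define eB where "eB = exp (- real mB * \<eta>\<^sup>2 / (4 * (1 + \<eta>)\<^sup>2 * (9 / p)))"
    have eps: "emeasure (iter n p (mA + mB) s) {s'. \<not> frac_ge n (Suc i) s'} \<le> ennreal (eA + eB)"
      if "frac_ge n i s" for s
      unfolding eA_def eB_def
      by (rule chain[OF n p eta(1) _ _ that]) (use mA1 mB1 in \<open>simp_all add: DA_def DB_def\<close>)
    have eAb: "eA \<le> exp (- \<kappa> * real n)"
    proof -
      have "\<kappa> * real n \<le> real mA * \<eta>\<^sup>2 / (4 * (1 + \<eta>)\<^sup>2 * 10)"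
      proof -
        have q: "0 < (1 + \<eta>)\<^sup>2" using eta by simp
        have "0 \<le> \<eta> * DA" using DA0 eta by (intro mult_nonneg_nonneg) auto
        hence "real n / 2 \<le> real mA" using DA0 mA1 by (simp add: algebra_simps)
        hence "\<kappa> * real n \<le> \<kappa> * (2 * real mA)" using kappa by (intro mult_left_mono) auto
        also have "\<dots> = real mA * \<eta>\<^sup>2 * p / (80 * (1 + \<eta>)\<^sup>2)" by (simp add: \<kappa>_def field_simps)
        also have "\<dots> \<le> real mA * \<eta>\<^sup>2 / (80 * (1 + \<eta>)\<^sup>2)"
          using p q by (intro divide_right_mono) (auto intro: mult_left_le)
        also have "\<dots> \<le> real mA * \<eta>\<^sup>2 / (4 * (1 + \<eta>)\<^sup>2 * 10)"
          using q by (intro divide_left_mono) auto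
        finally show ?thesis .
      qed
      thus ?thesis unfolding eA_def by simp
    qed
    have eBb: "eB \<le> exp (- \<kappa> * real n)"
    proof -
      have "\<kappa> * real n \<le> real mB * \<eta>\<^sup>2 / (4 * (1 + \<eta>)\<^sup>2 * (9 / p))"
      proof -
        have q: "0 < (1 + \<eta>)\<^sup>2" using eta by simp
        have "0 \<le> \<eta> * DB" using DB0 eta by (intro mult_nonneg_nonneg) auto
        hence "real n / 4 \<le> real mB" using DB0 mB1 by (simp add: algebra_simps)
        hence "\<kappa> * real n \<le> \<kappa> * (4 * real mB)" using kappa by (intro mult_left_mono) auto
        also have "\<dots> = real mB * \<eta>\<^sup>2 * p / (40 * (1 + \<eta>)\<^sup>2)" by (simp add: \<kappa>_def field_simps)
        also have "\<dots> \<le> real mB * \<eta>\<^sup>2 * p / (36 * (1 + \<eta>)\<^sup>2)"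
          using p q by (intro divide_left_mono) auto
        also have "\<dots> = real mB * \<eta>\<^sup>2 / (4 * (1 + \<eta>)\<^sup>2 * (9 / p))" using p by (simp add: field_simps)
        finally show ?thesis .
      qed
      thus ?thesis unfolding eB_def by simp
    qed
    have "measure_pmf.prob (run n p (horizon n (211/100 + ln (1/p) / 2) N))
             {xs. gap_fail n i (211/100 + ln (1/p) / 2) N xs} \<le> eA + eB"
      by (rule fail_bound[OF eps window]) (auto simp: eA_def eB_def)
    also have "\<dots> \<le> 2 * exp (- \<kappa> * real n)" using eAb eBb by simp
    also have "\<dots> \<le> 1 / real n ^ e"
    proof -
      have pos: "0 < real n ^ e" using n by simp
      have "2 * exp (- \<kappa> * real n) * real n ^ e \<le> 1" using nexp by (simp add: algebra_simps)
      thus ?thesis using pos by (simp add: field_simps)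
    qed
    finally show "measure_pmf.prob (run n p (horizon n (211/100 + ln (1/p) / 2) N))
             {xs. gap_fail n i (211/100 + ln (1/p) / 2) N xs} \<le> 1 / real n ^ e" .
  qed
qed

end
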